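(* Let $\mathcal A$ be a weakly idempotent complete pre-additive category and $M$ a simplicial module in $\mathcal A$. For every $n\ge0$ the family $\{\partial_{n,i}:M_n\to M_{n-1}\}_{1\le i\le n}$ has a joint kernel $\iota:N_n(M)\to M_n$ (the "intersection" $\bigcap_{i=1}^n\ker\partial_{n,i}$), and the idempotent $p_n$ splits through it: there is $r:M_n\to N_n(M)$ with $r\iota=1$ and $\iota r=p_n$. Consequently $M_n\cong N_n(M)\oplus D_n(M)$ where $D_n(M)$ is the image (splitting) of $1-p_n$.
   Context: Let $\mathcal A$ be a pre-additive category. Let $\Delta$ be the category with objects $[n]$, $n\ge0$, and morphisms $[m]\to[n]$ the weakly monotone maps $f:\mathbb Z\to\mathbb Z$ with $f(j+m+1)=f(j)+n+1$, $f(0)\ge0$, $f(m)\le n$ (equivalently, weakly monotone maps $\{0,\dots,m\}\to\{0,\dots,n\}$). Let $\varepsilon^n_i:[n-1]\to[n]$ ($0\le i\le n$) skip $i$ ($\varepsilon^n_i(j)=j$ for $j<i$, $j+1$ for $j\ge i$), and $\eta^n_i:[n+1]\to[n]$ ($0\le i\le n$) repeat $i$ ($\eta^n_i(j)=j$ for $j\le i$, $j-1$ for $j>i$). A simplicial module is a functor $M:\Delta^{op}\to\mathcal A$; write $M_n=M([n])$, $\partial_{n,i}=M(\varepsilon^n_i):M_n\to M_{n-1}$, $s_{n,i}=M(\eta^n_i):M_n\to M_{n+1}$. Define $p_n=(1-s_{n-1,0}\partial_{n,1})(1-s_{n-1,1}\partial_{n,2})\cdots(1-s_{n-1,n-1}\partial_{n,n})$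 ($p_0=1$). A pre-additive category is weakly idempotent complete if every morphism $f$ admitting $g$ with $fg=1$ has a kernel. An idempotent $p$ on $A$ splits if $p=\iota r$ with $r\iota=1$. *)

theory Defs
  imports Main
begin

text \<open>A pre-additive category, encoded by its object set, hom-sets, composition
  (cmp g f = g o f, i.e. f first), identities, and abelian group structure on each hom-set.\<close>

record ('o,'m) preadd =
  Ob :: "'o set"
  Hm :: "'o \<Rightarrow> 'o \<Rightarrow> 'm set"
  cmp :: "'m \<Rightarrow> 'm \<Rightarrow> 'm"
  ident :: "'o \<Rightarrow> 'm"
  pls :: "'m \<Rightarrow> 'm \<Rightarrow> 'm"
  zer :: "'o \<Rightarrow> 'o \<Rightarrow> 'm"
  ngt :: "'m \<Rightarrow> 'm"

definition preadditive :: "('o,'m,'x) preadd_scheme \<Rightarrow> bool" where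
  "preadditive C \<longleftrightarrow>
    (\<forall>a\<in>Ob C. ident C a \<in> Hm C a a) \<and>
    (\<forall>a\<in>Ob C. \<forall>b\<in>Ob C. \<forall>c\<in>Ob C. \<forall>f\<in>Hm C a b. \<forall>g\<in>Hm C b c. cmp C g f \<in> Hm C a c) \<and>
    (\<forall>a\<in>Ob C. \<forall>b\<in>Ob C. \<forall>c\<in>Ob C. \<forall>d\<in>Ob C. \<forall>f\<in>Hm C a b. \<forall>g\<in>Hm C b c. \<forall>h\<in>Hm C c d.
        cmp C h (cmp C g f) = cmp C (cmp C h g) f) \<and>
    (\<forall>a\<in>Ob C. \<forall>b\<in>Ob C. \<forall>f\<in>Hm C a b. cmp C (ident C b) f = f \<and> cmp C f (ident C a) = f) \<and>
    (\<forall>a\<in>Ob C. \<forall>b\<in>Ob C.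
        zer C a b \<in> Hm C a b \<and>
        (\<forall>f\<in>Hm C a b. \<forall>g\<in>Hm C a b. pls C f g \<in> Hm C a b) \<and>
        (\<forall>f\<in>Hm C a b. ngt C f \<in> Hm C a b) \<and>
        (\<forall>f\<in>Hm C a b. \<forall>g\<in>Hm C a b. \<forall>h\<in>Hm C a b. pls C (pls C f g) h = pls C f (pls C g h)) \<and>
        (\<forall>f\<in>Hm C a b. \<forall>g\<in>Hm C a b. pls C f g = pls C g f) \<and>
        (\<forall>f\<in>Hm C a b. pls C (zer C a b) f = f) \<and>
        (\<forall>f\<in>Hm C a b. pls C f (ngt C f) = zer C a b)) \<and>
    (\<forall>a\<in>Ob C. \<forall>b\<in>Ob C. \<forall>c\<in>Ob C. \<forall>f\<in>Hm C a b. \<forall>g\<in>Hm C a b. \<forall>h\<in>Hm C b c.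
        cmp C h (pls C f g) = pls C (cmp C h f) (cmp C h g)) \<and>
    (\<forall>a\<in>Ob C. \<forall>b\<in>Ob C. \<forall>c\<in>Ob C. \<forall>f\<in>Hm C b c. \<forall>g\<in>Hm C b c. \<forall>h\<in>Hm C a b.
        cmp C (pls C f g) h = pls C (cmp C f h) (cmp C g h))"

definition is_kernel :: "('o,'m,'x) preadd_scheme \<Rightarrow> 'o \<Rightarrow> 'o \<Rightarrow> 'm \<Rightarrow> 'o \<Rightarrow> 'm \<Rightarrow> bool" where
  "is_kernel C a b f K k \<longleftrightarrow>
    K \<in> Ob C \<and> k \<in> Hm C K a \<and> cmp C f k = zer C K b \<and>
    (\<forall>X\<in>Ob C. \<forall>h\<in>Hm C X a. cmp C f h = zer C X b \<longrightarrow>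
        (\<exists>!u. u \<in> Hm C X K \<and> cmp C k u = h))"

definition is_joint_kernel ::
  "('o,'m,'x) preadd_scheme \<Rightarrow> 'o \<Rightarrow> 'o \<Rightarrow> 'i set \<Rightarrow> ('i \<Rightarrow> 'm) \<Rightarrow> 'o \<Rightarrow> 'm \<Rightarrow> bool" where
  "is_joint_kernel C a b I d K k \<longleftrightarrow>
    K \<in> Ob C \<and> k \<in> Hm C K a \<and> (\<forall>i\<in>I. cmp C (d i) k = zer C K b) \<and>
    (\<forall>X\<in>Ob C. \<forall>h\<in>Hm C X a. (\<forall>i\<in>I. cmp C (d i) h = zer C X b) \<longrightarrow>
        (\<exists>!u. u \<in> Hm C X K \<and> cmp C k u = h))"

definition weakly_idempotent_complete :: "('o,'m,'x) preadd_scheme \<Rightarrow> bool" where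
  "weakly_idempotent_complete C \<longleftrightarrow>
    (\<forall>a\<in>Ob C. \<forall>b\<in>Ob C. \<forall>f\<in>Hm C a b. \<forall>g\<in>Hm C b a.
        cmp C f g = ident C b \<longrightarrow> (\<exists>K k. is_kernel C a b f K k))"

text \<open>Morphisms [m] \<rightarrow> [n]: weakly monotone maps {0..m} \<rightarrow> {0..n}, made extensional
  (value 0 outside {0..m}).\<close>
definition delta_hom :: "nat \<Rightarrow> nat \<Rightarrow> (nat \<Rightarrow> nat) set" where
  "delta_hom m n = {f. (\<forall>i\<le>m. f i \<le> n) \<and> (\<forall>i j. i \<le> j \<longrightarrow> j \<le> m \<longrightarrow> f i \<le> f j)
                      \<and> (\<forall>i. m < i \<longrightarrow> f i = 0)}"

definition delta_id :: "nat \<Rightarrow> nat \<Rightarrow> nat" where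
  "delta_id n = (\<lambda>i. if i \<le> n then i else 0)"

definition delta_comp :: "nat \<Rightarrow> (nat \<Rightarrow> nat) \<Rightarrow> (nat \<Rightarrow> nat) \<Rightarrow> nat \<Rightarrow> nat" where
  "delta_comp k g f = (\<lambda>i. if i \<le> k then g (f i) else 0)"

definition coface :: "nat \<Rightarrow> nat \<Rightarrow> nat \<Rightarrow> nat" where
  "coface n i = (\<lambda>j. if j \<le> n - 1 then (if j < i then j else j + 1) else 0)"

definition codegen :: "nat \<Rightarrow> nat \<Rightarrow> nat \<Rightarrow> nat" where
  "codegen n i = (\<lambda>j. if j \<le> n + 1 then (if j \<le> i then j else j - 1) else 0)"

text \<open>A functor M : \<Delta>^op \<rightarrow> C, given by objects Mo n = M_n and, for f : [m] \<rightarrow> [n],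
  Mf m n f = M(f) : M_n \<rightarrow> M_m.\<close>
definition simplicial_module ::
  "('o,'m,'x) preadd_scheme \<Rightarrow> (nat \<Rightarrow> 'o) \<Rightarrow> (nat \<Rightarrow> nat \<Rightarrow> (nat \<Rightarrow> nat) \<Rightarrow> 'm) \<Rightarrow> bool" where
  "simplicial_module C Mo Mf \<longleftrightarrow>
    (\<forall>n. Mo n \<in> Ob C) \<and>
    (\<forall>m n. \<forall>f\<in>delta_hom m n. Mf m n f \<in> Hm C (Mo n) (Mo m)) \<and>
    (\<forall>n. Mf n n (delta_id n) = ident C (Mo n)) \<and>
    (\<forall>k m n. \<forall>f\<in>delta_hom k m. \<forall>g\<in>delta_hom m n.
        Mf k n (delta_comp k g f) = cmp C (Mf k m f) (Mf m n g))"

definition face :: "(nat \<Rightarrow> nat \<Rightarrow> (nat \<Rightarrow> nat) \<Rightarrow> 'm) \<Rightarrow> nat \<Rightarrow> nat \<Rightarrow> 'm" where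
  "face Mf n i = Mf (n - 1) n (coface n i)"

definition degen :: "(nat \<Rightarrow> nat \<Rightarrow> (nat \<Rightarrow> nat) \<Rightarrow> 'm) \<Rightarrow> nat \<Rightarrow> nat \<Rightarrow> 'm" where
  "degen Mf n i = Mf (n + 1) n (codegen n i)"

definition pfactor :: "('o,'m,'x) preadd_scheme \<Rightarrow> (nat \<Rightarrow> 'o) \<Rightarrow> (nat \<Rightarrow> nat \<Rightarrow> (nat \<Rightarrow> nat) \<Rightarrow> 'm)
    \<Rightarrow> nat \<Rightarrow> nat \<Rightarrow> 'm" where
  "pfactor C Mo Mf n i =
     pls C (ident C (Mo n)) (ngt C (cmp C (degen Mf (n - 1) i) (face Mf n (i + 1))))"

fun ppart :: "('o,'m,'x) preadd_scheme \<Rightarrow> (nat \<Rightarrow> 'o) \<Rightarrow> (nat \<Rightarrow> nat \<Rightarrow> (nat \<Rightarrow> nat) \<Rightarrow> 'm)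
    \<Rightarrow> nat \<Rightarrow> nat \<Rightarrow> 'm" where
  "ppart C Mo Mf n 0 = ident C (Mo n)"
| "ppart C Mo Mf n (Suc k) = cmp C (ppart C Mo Mf n k) (pfactor C Mo Mf n k)"

definition pn :: "('o,'m,'x) preadd_scheme \<Rightarrow> (nat \<Rightarrow> 'o) \<Rightarrow> (nat \<Rightarrow> nat \<Rightarrow> (nat \<Rightarrow> nat) \<Rightarrow> 'm)
    \<Rightarrow> nat \<Rightarrow> 'm" where
  "pn C Mo Mf n = ppart C Mo Mf n n"

end

theory Submission
  imports Defs
begin


context fixes C :: "('o,'m,'x) preadd_scheme" assumes P: "preadditive C"
begin

lemma c1: "\<forall>a\<in>Ob C. ident C a \<in> Hm C a a"
  using P unfolding preadditive_def by (elim conjE) assumption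
lemma c2: "\<forall>a\<in>Ob C. \<forall>b\<in>Ob C. \<forall>c\<in>Ob C. \<forall>f\<in>Hm C a b. \<forall>g\<in>Hm C b c. cmp C g f \<in> Hm C a c"
  using P unfolding preadditive_def by (elim conjE) assumption
lemma c3: "\<forall>a\<in>Ob C. \<forall>b\<in>Ob C. \<forall>c\<in>Ob C. \<forall>d\<in>Ob C. \<forall>f\<in>Hm C a b. \<forall>g\<in>Hm C b c. \<forall>h\<in>Hm C c d.
        cmp C h (cmp C g f) = cmp C (cmp C h g) f"
  using P unfolding preadditive_def by (elim conjE) assumption
lemma c4: "\<forall>a\<in>Ob C. \<forall>b\<in>Ob C. \<forall>f\<in>Hm C a b. cmp C (ident C b) f = f \<and> cmp C f (ident C a) = f"
  using P unfolding preadditive_def by (elim conjE) assumption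
lemma c5: "\<forall>a\<in>Ob C. \<forall>b\<in>Ob C.
        zer C a b \<in> Hm C a b \<and>
        (\<forall>f\<in>Hm C a b. \<forall>g\<in>Hm C a b. pls C f g \<in> Hm C a b) \<and>
        (\<forall>f\<in>Hm C a b. ngt C f \<in> Hm C a b) \<and>
        (\<forall>f\<in>Hm C a b. \<forall>g\<in>Hm C a b. \<forall>h\<in>Hm C a b. pls C (pls C f g) h = pls C f (pls C g h)) \<and>
        (\<forall>f\<in>Hm C a b. \<forall>g\<in>Hm C a b. pls C f g = pls C g f) \<and>
        (\<forall>f\<in>Hm C a b. pls C (zer C a b) f = f) \<and>
        (\<forall>f\<in>Hm C a b. pls C f (ngt C f) = zer C a b)"
  using P unfolding preadditive_def by (elim conjE) assumption
lemma c6: "\<forall>a\<in>Ob C. \<forall>b\<in>Ob C. \<forall>c\<in>Ob C. \<forall>f\<in>Hm C a b. \<forall>g\<in>Hm C a b. \<forall>h\<in>Hm C b c.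
        cmp C h (pls C f g) = pls C (cmp C h f) (cmp C h g)"
  using P unfolding preadditive_def by (elim conjE) assumption
lemma c7: "\<forall>a\<in>Ob C. \<forall>b\<in>Ob C. \<forall>c\<in>Ob C. \<forall>f\<in>Hm C b c. \<forall>g\<in>Hm C b c. \<forall>h\<in>Hm C a b.
        cmp C (pls C f g) h = pls C (cmp C f h) (cmp C g h)"
  using P unfolding preadditive_def by (elim conjE) assumption

lemma idH: "a \<in> Ob C \<Longrightarrow> ident C a \<in> Hm C a a"
  using c1 by blast
lemma cmpH: "a \<in> Ob C \<Longrightarrow> b \<in> Ob C \<Longrightarrow> c \<in> Ob C \<Longrightarrow> f \<in> Hm C a b \<Longrightarrow> g \<in> Hm C b c
   \<Longrightarrow> cmp C g f \<in> Hm C a c"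
  using c2 by blast
lemma assoc: "a \<in> Ob C \<Longrightarrow> b \<in> Ob C \<Longrightarrow> c \<in> Ob C \<Longrightarrow> d \<in> Ob C \<Longrightarrow> f \<in> Hm C a b \<Longrightarrow> g \<in> Hm C b c
   \<Longrightarrow> h \<in> Hm C c d \<Longrightarrow> cmp C h (cmp C g f) = cmp C (cmp C h g) f"
  using c3 by blast
lemma idl: "a \<in> Ob C \<Longrightarrow> b \<in> Ob C \<Longrightarrow> f \<in> Hm C a b \<Longrightarrow> cmp C (ident C b) f = f"
  using c4 by blast
lemma idr: "a \<in> Ob C \<Longrightarrow> b \<in> Ob C \<Longrightarrow> f \<in> Hm C a b \<Longrightarrow> cmp C f (ident C a) = f"
  using c4 by blast
lemma zerH: "a \<in> Ob C \<Longrightarrow> b \<in> Ob C \<Longrightarrow> zer C a b \<in> Hm C a b"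
  using c5 by blast
lemma plsH: "a \<in> Ob C \<Longrightarrow> b \<in> Ob C \<Longrightarrow> f \<in> Hm C a b \<Longrightarrow> g \<in> Hm C a b \<Longrightarrow> pls C f g \<in> Hm C a b"
  using c5 by blast
lemma ngtH: "a \<in> Ob C \<Longrightarrow> b \<in> Ob C \<Longrightarrow> f \<in> Hm C a b \<Longrightarrow> ngt C f \<in> Hm C a b"
  using c5 by blast
lemma pls_assoc: "a \<in> Ob C \<Longrightarrow> b \<in> Ob C \<Longrightarrow> f \<in> Hm C a b \<Longrightarrow> g \<in> Hm C a b \<Longrightarrow> h \<in> Hm C a b
  \<Longrightarrow> pls C (pls C f g) h = pls C f (pls C g h)"
  using c5 by blast
lemma pls_comm: "a \<in> Ob C \<Longrightarrow> b \<in> Ob C \<Longrightarrow> f \<in> Hm C a b \<Longrightarrow> g \<in> Hm C a b \<Longrightarrow> pls C f g = pls C g f"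
  using c5 by blast
lemma zer_l: "a \<in> Ob C \<Longrightarrow> b \<in> Ob C \<Longrightarrow> f \<in> Hm C a b \<Longrightarrow> pls C (zer C a b) f = f"
  using c5 by blast
lemma ngt_r: "a \<in> Ob C \<Longrightarrow> b \<in> Ob C \<Longrightarrow> f \<in> Hm C a b \<Longrightarrow> pls C f (ngt C f) = zer C a b"
  using c5 by blast
lemma distl: "a \<in> Ob C \<Longrightarrow> b \<in> Ob C \<Longrightarrow> c \<in> Ob C \<Longrightarrow> f \<in> Hm C a b \<Longrightarrow> g \<in> Hm C a b \<Longrightarrow> h \<in> Hm C b c
  \<Longrightarrow> cmp C h (pls C f g) = pls C (cmp C h f) (cmp C h g)"
  using c6 by blast
lemma distr: "a \<in> Ob C \<Longrightarrow> b \<in> Ob C \<Longrightarrow> c \<in> Ob C \<Longrightarrow> f \<in> Hm C b c \<Longrightarrow> g \<in> Hm C b c \<Longrightarrow> h \<in> Hm C a b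
  \<Longrightarrow> cmp C (pls C f g) h = pls C (cmp C f h) (cmp C g h)"
  using c7 by blast

lemma zer_r: "a \<in> Ob C \<Longrightarrow> b \<in> Ob C \<Longrightarrow> f \<in> Hm C a b \<Longrightarrow> pls C f (zer C a b) = f"
  by (metis pls_comm zerH zer_l)

lemma cancel: assumes "a \<in> Ob C" "b \<in> Ob C" "x \<in> Hm C a b" "y \<in> Hm C a b" "z \<in> Hm C a b"
  "pls C x y = pls C x z" shows "y = z"
proof -
  have "y = pls C (pls C (ngt C x) x) y" using assms
    by (metis ngt_r ngtH pls_comm zer_l)
  also have "\<dots> = pls C (ngt C x) (pls C x y)" using assms by (metis ngtH pls_assoc)
  also have "\<dots> = pls C (ngt C x) (pls C x z)" using assms by simp
  also have "\<dots> = pls C (pls C (ngt C x) x) z" using assms by (metis ngtH pls_assoc)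
  also have "\<dots> = z" using assms by (metis ngt_r ngtH pls_comm zer_l)
  finally show ?thesis .
qed

lemma cmp_zer_r: assumes "a \<in> Ob C" "b \<in> Ob C" "c \<in> Ob C" "h \<in> Hm C b c"
  shows "cmp C h (zer C a b) = zer C a c"
proof -
  have z: "zer C a b \<in> Hm C a b" using assms zerH by blast
  have hz: "cmp C h (zer C a b) \<in> Hm C a c" using assms z cmpH by blast
  have "pls C (cmp C h (zer C a b)) (cmp C h (zer C a b)) = cmp C h (pls C (zer C a b) (zer C a b))"
    using assms z by (metis distl)
  also have "\<dots> = cmp C h (zer C a b)" using assms z zer_l by metis
  also have "\<dots> = pls C (cmp C h (zer C a b)) (zer C a c)" using assms hz zer_r by metis
  finally show ?thesis using cancel[OF assms(1,3) hz hz] assms zerH by blast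
qed

lemma cmp_zer_l: assumes "a \<in> Ob C" "b \<in> Ob C" "c \<in> Ob C" "h \<in> Hm C a b"
  shows "cmp C (zer C b c) h = zer C a c"
proof -
  have z: "zer C b c \<in> Hm C b c" using assms zerH by blast
  have hz: "cmp C (zer C b c) h \<in> Hm C a c" using assms z cmpH by blast
  have "pls C (cmp C (zer C b c) h) (cmp C (zer C b c) h) = cmp C (pls C (zer C b c) (zer C b c)) h"
    using assms z by (metis distr)
  also have "\<dots> = cmp C (zer C b c) h" using assms z zer_l by metis
  also have "\<dots> = pls C (cmp C (zer C b c) h) (zer C a c)" using assms hz zer_r by metis
  finally show ?thesis using cancel[OF assms(1,3) hz hz] assms zerH by blast
qed

lemma ngt_unique: assumes "a \<in> Ob C" "b \<in> Ob C" "f \<in> Hm C a b" "g \<in> Hm C a b"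
  "pls C f g = zer C a b" shows "g = ngt C f"
  using cancel[OF assms(1,2,3,4) ngtH[OF assms(1,2,3)]] assms ngt_r by metis

lemma cmp_ngt_r: assumes "a \<in> Ob C" "b \<in> Ob C" "c \<in> Ob C" "f \<in> Hm C a b" "h \<in> Hm C b c"
  shows "cmp C h (ngt C f) = ngt C (cmp C h f)"
proof -
  have "pls C (cmp C h f) (cmp C h (ngt C f)) = cmp C h (pls C f (ngt C f))"
    using assms by (metis distl ngtH)
  also have "\<dots> = zer C a c" using assms by (metis ngt_r cmp_zer_r)
  finally show ?thesis using ngt_unique assms cmpH ngtH by metis
qed

lemma cmp_ngt_l: assumes "a \<in> Ob C" "b \<in> Ob C" "c \<in> Ob C" "f \<in> Hm C b c" "h \<in> Hm C a b"
  shows "cmp C (ngt C f) h = ngt C (cmp C f h)"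
proof -
  have "pls C (cmp C f h) (cmp C (ngt C f) h) = cmp C (pls C f (ngt C f)) h"
    using assms by (metis distr ngtH)
  also have "\<dots> = zer C a c" using assms by (metis ngt_r cmp_zer_l)
  finally show ?thesis using ngt_unique assms cmpH ngtH by metis
qed

lemma ngt_zer: "a \<in> Ob C \<Longrightarrow> b \<in> Ob C \<Longrightarrow> ngt C (zer C a b) = zer C a b"
  by (metis ngt_unique zerH zer_l)

end


lemma coface_hom: "coface (Suc m) i \<in> delta_hom m (Suc m)"
  unfolding delta_hom_def coface_def by auto
lemma codegen_hom: "i \<le> m \<Longrightarrow> codegen m i \<in> delta_hom (Suc m) m"
  unfolding delta_hom_def codegen_def by auto

context fixes C :: "('o,'m,'x) preadd_scheme" and Mo Mf
  assumes SM: "simplicial_module C Mo Mf"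
begin
lemma MoOb: "Mo n \<in> Ob C" using SM unfolding simplicial_module_def by blast
lemma MfH: "f \<in> delta_hom m n \<Longrightarrow> Mf m n f \<in> Hm C (Mo n) (Mo m)"
  using SM unfolding simplicial_module_def by blast
lemma Mf_id: "Mf n n (delta_id n) = ident C (Mo n)"
  using SM unfolding simplicial_module_def by blast
lemma Mf_comp: "f \<in> delta_hom k m \<Longrightarrow> g \<in> delta_hom m n \<Longrightarrow>
   cmp C (Mf k m f) (Mf m n g) = Mf k n (delta_comp k g f)"
  using SM unfolding simplicial_module_def by (elim conjE) (metis)

lemma faceH: "face Mf (Suc m) i \<in> Hm C (Mo (Suc m)) (Mo m)"
  unfolding face_def using MfH[OF coface_hom] by simp
lemma degenH: "i \<le> m \<Longrightarrow> degen Mf m i \<in> Hm C (Mo m) (Mo (Suc m))"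
  unfolding degen_def using MfH[OF codegen_hom] by simp

lemma SI1: "k \<le> m \<Longrightarrow> cmp C (face Mf (Suc m) (Suc k)) (degen Mf m k) = ident C (Mo m)"
proof -
  assume k: "k \<le> m"
  have "cmp C (face Mf (Suc m) (Suc k)) (degen Mf m k) =
     Mf m m (delta_comp m (codegen m k) (coface (Suc m) (Suc k)))"
    unfolding face_def degen_def using Mf_comp[OF coface_hom codegen_hom[OF k]] by simp
  also have "delta_comp m (codegen m k) (coface (Suc m) (Suc k)) = delta_id m"
    unfolding delta_comp_def codegen_def coface_def delta_id_def by (auto simp: fun_eq_iff)
  finally show ?thesis using Mf_id by simp
qed

lemma SI2: "j < k \<Longrightarrow> k \<le> Suc m' \<Longrightarrow>
  cmp C (face Mf (Suc (Suc m')) (Suc k)) (degen Mf (Suc m') j) = cmp C (degen Mf m' j) (face Mf (Suc m') k)"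
proof -
  assume jk: "j < k" "k \<le> Suc m'"
  have j1: "j \<le> Suc m'" "j \<le> m'" using jk by auto
  have "cmp C (face Mf (Suc (Suc m')) (Suc k)) (degen Mf (Suc m') j) =
     Mf (Suc m') (Suc m') (delta_comp (Suc m') (codegen (Suc m') j) (coface (Suc (Suc m')) (Suc k)))"
    unfolding face_def degen_def using Mf_comp[OF coface_hom codegen_hom[OF j1(1)]] by simp
  also have "delta_comp (Suc m') (codegen (Suc m') j) (coface (Suc (Suc m')) (Suc k))
     = delta_comp (Suc m') (coface (Suc m') k) (codegen m' j)"
    using jk unfolding delta_comp_def codegen_def coface_def by (auto simp: fun_eq_iff)
  also have "Mf (Suc m') (Suc m') \<dots> = cmp C (degen Mf m' j) (face Mf (Suc m') k)"
    unfolding face_def degen_def using Mf_comp[OF codegen_hom[OF j1(2)] coface_hom] by simp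
  finally show ?thesis .
qed

lemma SI3: "i \<le> k \<Longrightarrow>
  cmp C (face Mf (Suc m') i) (face Mf (Suc (Suc m')) (Suc k)) = cmp C (face Mf (Suc m') k) (face Mf (Suc (Suc m')) i)"
proof -
  assume ik: "i \<le> k"
  have "cmp C (face Mf (Suc m') i) (face Mf (Suc (Suc m')) (Suc k)) =
     Mf m' (Suc (Suc m')) (delta_comp m' (coface (Suc (Suc m')) (Suc k)) (coface (Suc m') i))"
    unfolding face_def using Mf_comp[OF coface_hom coface_hom] by simp
  also have "delta_comp m' (coface (Suc (Suc m')) (Suc k)) (coface (Suc m') i)
     = delta_comp m' (coface (Suc (Suc m')) i) (coface (Suc m') k)"
    using ik unfolding delta_comp_def coface_def by (auto simp: fun_eq_iff)
  also have "Mf m' (Suc (Suc m')) \<dots> = cmp C (face Mf (Suc m') k) (face Mf (Suc (Suc m')) i)"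
    unfolding face_def using Mf_comp[OF coface_hom coface_hom] by simp
  finally show ?thesis .
qed
end


context fixes C :: "('o,'m,'x) preadd_scheme" and Mo Mf
  assumes P: "preadditive C" and SM: "simplicial_module C Mo Mf"
begin

lemmas ob = MoOb[OF SM]
lemmas fH = faceH[OF SM]
lemmas sH = degenH[OF SM]
lemmas as = assoc[OF P]
lemmas cH = cmpH[OF P]

lemma pfactorH: "k \<le> m \<Longrightarrow> pfactor C Mo Mf (Suc m) k \<in> Hm C (Mo (Suc m)) (Mo (Suc m))"
proof -
  assume k: "k \<le> m"
  have "cmp C (degen Mf m k) (face Mf (Suc m) (Suc k)) \<in> Hm C (Mo (Suc m)) (Mo (Suc m))"
    using cH[OF ob ob ob fH sH[OF k]] .
  then show ?thesis unfolding pfactor_def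
    using plsH[OF P ob ob idH[OF P ob] ngtH[OF P ob ob]] by simp
qed

lemma ppartH: "k \<le> n \<Longrightarrow> ppart C Mo Mf n k \<in> Hm C (Mo n) (Mo n)"
proof (induction k)
  case 0 then show ?case using idH[OF P] ob by simp
next
  case (Suc k)
  then obtain m where n: "n = Suc m" by (cases n) auto
  have "k \<le> m" using Suc n by simp
  then show ?case using Suc n cH[OF ob ob ob pfactorH] by simp
qed

lemma comm1:
  assumes jk: "j < k" "k \<le> Suc m'"
  shows "cmp C (face Mf (Suc (Suc m')) (Suc k)) (pfactor C Mo Mf (Suc (Suc m')) j)
     = cmp C (pfactor C Mo Mf (Suc m') j) (face Mf (Suc (Suc m')) (Suc k))"
proof -
  define A where "A = Mo (Suc (Suc m'))"
  define B where "B = Mo (Suc m')"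
  define E where "E = Mo m'"
  define d where "d = face Mf (Suc (Suc m')) (Suc k)"
  define s where "s = degen Mf (Suc m') j"
  define d' where "d' = face Mf (Suc (Suc m')) (Suc j)"
  define s2 where "s2 = degen Mf m' j"
  define d2 where "d2 = face Mf (Suc m') k"
  define d3 where "d3 = face Mf (Suc m') (Suc j)"
  have o: "A \<in> Ob C" "B \<in> Ob C" "E \<in> Ob C" using ob A_def B_def E_def by auto
  have h: "d \<in> Hm C A B" "d' \<in> Hm C A B" "s \<in> Hm C B A" "s2 \<in> Hm C E B" "d2 \<in> Hm C B E" "d3 \<in> Hm C B E"
    using jk fH sH A_def B_def E_def d_def s_def d'_def s2_def d2_def d3_def by auto
  have sd: "cmp C s d' \<in> Hm C A A" using h o cH by blast
  have sd3: "cmp C s2 d3 \<in> Hm C B B" using h o cH by blast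
  have L: "pfactor C Mo Mf (Suc (Suc m')) j = pls C (ident C A) (ngt C (cmp C s d'))"
    unfolding pfactor_def A_def s_def d'_def by simp
  have R: "pfactor C Mo Mf (Suc m') j = pls C (ident C B) (ngt C (cmp C s2 d3))"
    unfolding pfactor_def B_def s2_def d3_def by simp
  have e1: "cmp C d s = cmp C s2 d2" using SI2[OF SM jk] d_def s_def s2_def d2_def by simp
  have e2: "cmp C d2 d' = cmp C d3 d" using SI3[OF SM, of "Suc j" k m'] jk d_def d'_def d2_def d3_def by simp
  have "cmp C d (pls C (ident C A) (ngt C (cmp C s d'))) = pls C (cmp C d (ident C A)) (cmp C d (ngt C (cmp C s d')))"
    using distl[OF P] o h sd idH[OF P] ngtH[OF P] by metis
  also have "\<dots> = pls C d (ngt C (cmp C d (cmp C s d')))"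
    using idr[OF P] cmp_ngt_r[OF P] o h sd by metis
  also have "cmp C d (cmp C s d') = cmp C (cmp C d s) d'" using as o h by metis
  also have "\<dots> = cmp C (cmp C s2 d2) d'" using e1 by simp
  also have "\<dots> = cmp C s2 (cmp C d2 d')" using as o h by metis
  also have "\<dots> = cmp C s2 (cmp C d3 d)" using e2 by simp
  also have "\<dots> = cmp C (cmp C s2 d3) d" using as o h by metis
  also have "pls C d (ngt C (cmp C (cmp C s2 d3) d)) = pls C (cmp C (ident C B) d) (cmp C (ngt C (cmp C s2 d3)) d)"
    using idl[OF P] cmp_ngt_l[OF P] o h sd3 by metis
  also have "\<dots> = cmp C (pls C (ident C B) (ngt C (cmp C s2 d3))) d"
    using distr[OF P] o h sd3 idH[OF P] ngtH[OF P] by metis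
  finally show ?thesis using L R d_def by simp
qed

lemma comm2:
  assumes k: "k \<le> m"
  shows "cmp C (face Mf (Suc m) (Suc k)) (pfactor C Mo Mf (Suc m) k) = zer C (Mo (Suc m)) (Mo m)"
proof -
  define A where "A = Mo (Suc m)"
  define B where "B = Mo m"
  define d where "d = face Mf (Suc m) (Suc k)"
  define s where "s = degen Mf m k"
  have o: "A \<in> Ob C" "B \<in> Ob C" using ob A_def B_def by auto
  have h: "d \<in> Hm C A B" "s \<in> Hm C B A"
    using k fH sH A_def B_def d_def s_def by auto
  have sd: "cmp C s d \<in> Hm C A A" using h o cH by blast
  have L: "pfactor C Mo Mf (Suc m) k = pls C (ident C A) (ngt C (cmp C s d))"
    unfolding pfactor_def A_def s_def d_def by simp
  have e1: "cmp C d s = ident C B" using SI1[OF SM k] d_def s_def B_def by simp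
  have "cmp C d (pls C (ident C A) (ngt C (cmp C s d))) = pls C (cmp C d (ident C A)) (cmp C d (ngt C (cmp C s d)))"
    using distl[OF P] o h sd idH[OF P] ngtH[OF P] by metis
  also have "\<dots> = pls C d (ngt C (cmp C d (cmp C s d)))"
    using idr[OF P] cmp_ngt_r[OF P] o h sd by metis
  also have "cmp C d (cmp C s d) = cmp C (cmp C d s) d" using as o h by metis
  also have "\<dots> = d" using e1 idl[OF P] o h by metis
  also have "pls C d (ngt C d) = zer C A B" using ngt_r[OF P] o h by metis
  finally show ?thesis using L d_def A_def B_def by simp
qed

lemma L1:
  assumes "k' \<le> k" "k \<le> m"
  shows "cmp C (face Mf (Suc m) (Suc k)) (ppart C Mo Mf (Suc m) k')
     = cmp C (ppart C Mo Mf m k') (face Mf (Suc m) (Suc k))"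
  using assms(1)
proof (induction k')
  case 0
  then show ?case using idr[OF P ob ob fH] idl[OF P ob ob fH] by simp
next
  case (Suc k')
  then obtain m' where m: "m = Suc m'" using assms(2) by (cases m) auto
  have kk: "k' < k" "k \<le> Suc m'" using Suc m assms by auto
  define d where "d = face Mf (Suc m) (Suc k)"
  have o: "Mo (Suc m) \<in> Ob C" "Mo m \<in> Ob C" using ob by auto
  have h: "d \<in> Hm C (Mo (Suc m)) (Mo m)" "ppart C Mo Mf (Suc m) k' \<in> Hm C (Mo (Suc m)) (Mo (Suc m))"
     "pfactor C Mo Mf (Suc m) k' \<in> Hm C (Mo (Suc m)) (Mo (Suc m))"
     "ppart C Mo Mf m k' \<in> Hm C (Mo m) (Mo m)"
     "pfactor C Mo Mf m k' \<in> Hm C (Mo m) (Mo m)"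
    using fH d_def ppartH pfactorH kk m assms by auto
  have IH: "cmp C d (ppart C Mo Mf (Suc m) k') = cmp C (ppart C Mo Mf m k') d"
    using Suc d_def by simp
  have c1: "cmp C d (pfactor C Mo Mf (Suc m) k') = cmp C (pfactor C Mo Mf m k') d"
    using comm1[OF kk] m d_def by simp
  have "cmp C d (ppart C Mo Mf (Suc m) (Suc k')) = cmp C d (cmp C (ppart C Mo Mf (Suc m) k') (pfactor C Mo Mf (Suc m) k'))"
    by simp
  also have "\<dots> = cmp C (cmp C d (ppart C Mo Mf (Suc m) k')) (pfactor C Mo Mf (Suc m) k')"
    using as o h by metis
  also have "\<dots> = cmp C (cmp C (ppart C Mo Mf m k') d) (pfactor C Mo Mf (Suc m) k')" using IH by simp
  also have "\<dots> = cmp C (ppart C Mo Mf m k') (cmp C d (pfactor C Mo Mf (Suc m) k'))"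
    using as o h by metis
  also have "\<dots> = cmp C (ppart C Mo Mf m k') (cmp C (pfactor C Mo Mf m k') d)" using c1 by simp
  also have "\<dots> = cmp C (ppart C Mo Mf m (Suc k')) d"
    using as o h by simp
  finally show ?case using d_def by simp
qed

end


definition splitk where
  "splitk C Mo Mf n k N \<iota> r \<longleftrightarrow> is_joint_kernel C (Mo n) (Mo (n - 1)) {1..k} (face Mf n) N \<iota> \<and>
     r \<in> Hm C (Mo n) N \<and> cmp C r \<iota> = ident C N \<and> cmp C \<iota> r = ppart C Mo Mf n k"

context fixes C :: "('o,'m,'x) preadd_scheme" and Mo Mf
  assumes P: "preadditive C" and SM: "simplicial_module C Mo Mf" and W: "weakly_idempotent_complete C"
begin

lemmas ob2 = MoOb[OF SM]
lemmas fH2 = faceH[OF SM]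
lemmas sH2 = degenH[OF SM]
lemmas as2 = assoc[OF P]
lemmas cH2 = cmpH[OF P]

lemma split0: "splitk C Mo Mf n 0 (Mo n) (ident C (Mo n)) (ident C (Mo n))"
  unfolding splitk_def is_joint_kernel_def
  using ob2 idH[OF P ob2] idl[OF P _ ob2] idr[OF P ob2 ob2] idl[OF P ob2 ob2 idH[OF P ob2]] by auto

lemma step:
  assumes k: "k \<le> m"
    and S1: "splitk C Mo Mf (Suc m) k N \<iota> r"
    and S2: "splitk C Mo Mf m k N2 \<iota>2 r2"
  shows "\<exists>N' \<iota>' r'. splitk C Mo Mf (Suc m) (Suc k) N' \<iota>' r'"
proof -
  define A where "A = Mo (Suc m)"
  define B where "B = Mo m"
  define d where "d = face Mf (Suc m) (Suc k)"
  define s where "s = degen Mf m k"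
  define P1 where "P1 = ppart C Mo Mf (Suc m) k"
  define P2 where "P2 = ppart C Mo Mf m k"
  define pf where "pf = pfactor C Mo Mf (Suc m) k"
  have oA: "A \<in> Ob C" and oB: "B \<in> Ob C" using ob2 A_def B_def by auto
  have J1: "is_joint_kernel C A B {1..k} (face Mf (Suc m)) N \<iota>" and rH: "r \<in> Hm C A N"
    and ri: "cmp C r \<iota> = ident C N" and ir: "cmp C \<iota> r = P1"
    using S1 unfolding splitk_def A_def B_def P1_def by auto
  have J2: "is_joint_kernel C B (Mo (m - 1)) {1..k} (face Mf m) N2 \<iota>2" and r2H: "r2 \<in> Hm C B N2"
    and ri2: "cmp C r2 \<iota>2 = ident C N2" and ir2: "cmp C \<iota>2 r2 = P2"
    using S2 unfolding splitk_def B_def P2_def by auto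
  have oN: "N \<in> Ob C" and iH: "\<iota> \<in> Hm C N A" and kill1: "\<forall>i\<in>{1..k}. cmp C (face Mf (Suc m) i) \<iota> = zer C N B"
    and U1: "\<forall>X\<in>Ob C. \<forall>h\<in>Hm C X A. (\<forall>i\<in>{1..k}. cmp C (face Mf (Suc m) i) h = zer C X B) \<longrightarrow>
        (\<exists>!u. u \<in> Hm C X N \<and> cmp C \<iota> u = h)"
    using J1 unfolding is_joint_kernel_def by auto
  have oN2: "N2 \<in> Ob C" and i2H: "\<iota>2 \<in> Hm C N2 B"
    and U2: "\<forall>X\<in>Ob C. \<forall>h\<in>Hm C X B. (\<forall>i\<in>{1..k}. cmp C (face Mf m i) h = zer C X (Mo (m - 1))) \<longrightarrow>
        (\<exists>!u. u \<in> Hm C X N2 \<and> cmp C \<iota>2 u = h)"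
    using J2 unfolding is_joint_kernel_def by auto
  have dH: "d \<in> Hm C A B" using fH2 A_def B_def d_def by simp
  have sH2': "s \<in> Hm C B A" using sH2[OF k] A_def B_def s_def by simp
  have P1H: "P1 \<in> Hm C A A" using ppartH[OF P SM, of k "Suc m"] k P1_def A_def by simp
  have P2H: "P2 \<in> Hm C B B" using ppartH[OF P SM, of k m] k P2_def B_def by simp
  have pfH: "pf \<in> Hm C A A" using pfactorH[OF P SM k] pf_def A_def by simp
  have ds: "cmp C d s = ident C B" using SI1[OF SM k] d_def s_def B_def by simp
  have dP1: "cmp C d P1 = cmp C P2 d" using L1[OF P SM order_refl k] d_def P1_def P2_def by simp
  have dpf: "cmp C d pf = zer C A B" using comm2[OF P SM k] d_def pf_def A_def B_def by simp
  have pf_eq: "pf = pls C (ident C A) (ngt C (cmp C s d))"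
    unfolding pf_def pfactor_def A_def s_def d_def by simp
  define f where "f = cmp C r2 (cmp C d \<iota>)"
  define g where "g = cmp C r (cmp C s \<iota>2)"
  have diH: "cmp C d \<iota> \<in> Hm C N B" using cH2[OF oN oA oB iH dH] .
  have fH2': "f \<in> Hm C N N2" using cH2[OF oN oB oN2 diH r2H] f_def by simp
  have si2H: "cmp C s \<iota>2 \<in> Hm C N2 A" using cH2[OF oN2 oB oA i2H sH2'] .
  have gH: "g \<in> Hm C N2 N" using cH2[OF oN2 oA oN si2H rH] g_def by simp
  have X1: "cmp C (cmp C d \<iota>) g = \<iota>2"
  proof -
    have "cmp C (cmp C d \<iota>) g = cmp C d (cmp C \<iota> (cmp C r (cmp C s \<iota>2)))"
      using as2[OF oN2 oN oA oB gH iH dH] g_def by simp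
    also have "\<dots> = cmp C d (cmp C P1 (cmp C s \<iota>2))"
      using as2[OF oN2 oA oN oA si2H rH iH] ir by simp
    also have "\<dots> = cmp C (cmp C P2 d) (cmp C s \<iota>2)"
      using as2[OF oN2 oA oA oB si2H P1H dH] dP1 by simp
    also have "\<dots> = cmp C P2 (cmp C d (cmp C s \<iota>2))"
      using as2[OF oN2 oA oB oB si2H dH P2H] by simp
    also have "\<dots> = cmp C P2 \<iota>2"
      using as2[OF oN2 oB oA oB i2H sH2' dH] ds idl[OF P oN2 oB i2H] by simp
    also have "\<dots> = \<iota>2"
      using as2[OF oN2 oB oN2 oB i2H r2H i2H] ir2 ri2 idr[OF P oN2 oB i2H] by simp
    finally show ?thesis .
  qed
  have fg: "cmp C f g = ident C N2"
    using as2[OF oN2 oN oB oN2 gH diH r2H] X1 ri2 f_def by simp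
  obtain K \<kappa> where KK: "is_kernel C N N2 f K \<kappa>"
    using W oN oN2 fH2' gH fg unfolding weakly_idempotent_complete_def by blast
  have oK: "K \<in> Ob C" and kH: "\<kappa> \<in> Hm C K N" and fk: "cmp C f \<kappa> = zer C K N2"
    and UK: "\<forall>X\<in>Ob C. \<forall>h\<in>Hm C X N. cmp C f h = zer C X N2 \<longrightarrow> (\<exists>!u. u \<in> Hm C X K \<and> cmp C \<kappa> u = h)"
    using KK unfolding is_kernel_def by auto
  define h0 where "h0 = cmp C r pf"
  have h0H: "h0 \<in> Hm C A N" using cH2[OF oA oA oN pfH rH] h0_def by simp
  have fh0: "cmp C f h0 = zer C A N2"
  proof -
    have "cmp C f h0 = cmp C r2 (cmp C (cmp C d \<iota>) h0)"
      using as2[OF oA oN oB oN2 h0H diH r2H] f_def by simp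
    also have "cmp C (cmp C d \<iota>) h0 = cmp C d (cmp C \<iota> (cmp C r pf))"
      using as2[OF oA oN oA oB h0H iH dH] h0_def by simp
    also have "\<dots> = cmp C d (cmp C P1 pf)"
      using as2[OF oA oA oN oA pfH rH iH] ir by simp
    also have "\<dots> = cmp C P2 (cmp C d pf)"
      using as2[OF oA oA oA oB pfH P1H dH] as2[OF oA oA oB oB pfH dH P2H] dP1 by simp
    also have "\<dots> = zer C A B" using dpf cmp_zer_r[OF P oA oB oB P2H] by simp
    also have "cmp C r2 (zer C A B) = zer C A N2" using cmp_zer_r[OF P oA oB oN2 r2H] .
    finally show ?thesis .
  qed
  obtain r' where r'H: "r' \<in> Hm C A K" and kr': "cmp C \<kappa> r' = h0"
    using UK oA h0H fh0 by blast
  define \<iota>' where "\<iota>' = cmp C \<iota> \<kappa>"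
  have i'H: "\<iota>' \<in> Hm C K A" using cH2[OF oK oN oA kH iH] \<iota>'_def by simp
  have fk2: "cmp C r2 (cmp C d \<iota>') = zer C K N2"
    using fk f_def \<iota>'_def as2[OF oK oN oB oN2 kH diH r2H] as2[OF oK oN oA oB kH iH dH] by simp
  have di'H: "cmp C d \<iota>' \<in> Hm C K B" using cH2[OF oK oA oB i'H dH] .
  have di'0: "cmp C d \<iota>' = zer C K B"
  proof -
    obtain m' where m: "m = Suc m'" if "k \<noteq> 0" using k by (cases m) auto
    have "\<forall>i\<in>{1..k}. cmp C (face Mf m i) (cmp C d \<iota>') = zer C K (Mo (m - 1))"
    proof
      fix i assume i: "i \<in> {1..k}"
      then have m: "m = Suc m'" using m by auto
      have ik: "i \<le> k" using i by auto
      have fmi: "face Mf m i \<in> Hm C B (Mo (m - 1))" "face Mf m k \<in> Hm C B (Mo (m - 1))"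
        using fH2 m B_def by auto
      have fsi: "face Mf (Suc m) i \<in> Hm C A B" using fH2 A_def B_def by simp
      have om: "Mo (m - 1) \<in> Ob C" using ob2 by simp
      have "cmp C (face Mf m i) (cmp C d \<iota>') = cmp C (cmp C (face Mf m i) d) \<iota>'"
        using as2[OF oK oA oB om i'H dH fmi(1)] .
      also have "cmp C (face Mf m i) d = cmp C (face Mf m k) (face Mf (Suc m) i)"
        using SI3[OF SM ik, of m'] m d_def by simp
      also have "cmp C (cmp C (face Mf m k) (face Mf (Suc m) i)) \<iota>' =
          cmp C (face Mf m k) (cmp C (cmp C (face Mf (Suc m) i) \<iota>) \<kappa>)"
        using as2[OF oK oA oB om i'H fsi fmi(2)] as2[OF oK oN oA oB kH iH fsi] \<iota>'_def by simp
      also have "\<dots> = zer C K (Mo (m - 1))"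
        using kill1 i cmp_zer_l[OF P oK oN oB kH] cmp_zer_r[OF P oK oB om fmi(2)] by simp
      finally show "cmp C (face Mf m i) (cmp C d \<iota>') = zer C K (Mo (m - 1))" .
    qed
    then obtain u where uH: "u \<in> Hm C K N2" and iu: "cmp C \<iota>2 u = cmp C d \<iota>'"
      using U2 oK di'H by blast
    have "cmp C d \<iota>' = cmp C \<iota>2 (cmp C r2 (cmp C \<iota>2 u))"
      using iu as2[OF oK oN2 oB oN2 uH i2H r2H] ri2 idl[OF P oK oN2 uH] by simp
    also have "\<dots> = zer C K B" using iu fk2 cmp_zer_r[OF P oK oN2 oB i2H] by simp
    finally show ?thesis .
  qed
  have pfi': "cmp C pf \<iota>' = \<iota>'"
  proof -
    have sdH: "cmp C s d \<in> Hm C A A" using cH2[OF oA oB oA dH sH2'] .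
    have "cmp C pf \<iota>' = pls C (cmp C (ident C A) \<iota>') (cmp C (ngt C (cmp C s d)) \<iota>')"
      using pf_eq distr[OF P oK oA oA idH[OF P oA] ngtH[OF P oA oA sdH] i'H] by simp
    also have "\<dots> = pls C \<iota>' (ngt C (cmp C s (cmp C d \<iota>')))"
      using idl[OF P oK oA i'H] cmp_ngt_l[OF P oK oA oA sdH i'H] as2[OF oK oA oB oA i'H dH sH2'] by simp
    also have "\<dots> = \<iota>'"
      using di'0 cmp_zer_r[OF P oK oB oA sH2'] ngt_zer[OF P oK oA] zer_r[OF P oK oA i'H] by simp
    finally show ?thesis .
  qed
  have r'i': "cmp C r' \<iota>' = ident C K"
  proof -
    have a: "cmp C r' \<iota>' \<in> Hm C K K" using cH2[OF oK oA oK i'H r'H] .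
    have b: "ident C K \<in> Hm C K K" using idH[OF P oK] .
    have "cmp C \<kappa> (cmp C r' \<iota>') = cmp C (cmp C r pf) \<iota>'"
      using as2[OF oK oA oK oN i'H r'H kH] kr' h0_def by simp
    also have "\<dots> = cmp C r (cmp C \<iota> \<kappa>)"
      using as2[OF oK oA oA oN i'H pfH rH] pfi' \<iota>'_def by simp
    also have "\<dots> = \<kappa>" using as2[OF oK oN oA oN kH iH rH] ri idl[OF P oK oN kH] by simp
    finally have e1: "cmp C \<kappa> (cmp C r' \<iota>') = \<kappa>" .
    have e2: "cmp C \<kappa> (ident C K) = \<kappa>" using idr[OF P oK oN kH] .
    show ?thesis using UK oK kH fk a b e1 e2 by blast
  qed
  have i'r': "cmp C \<iota>' r' = ppart C Mo Mf (Suc m) (Suc k)"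
    using as2[OF oA oK oN oA r'H kH iH] \<iota>'_def kr' h0_def as2[OF oA oA oN oA pfH rH iH] ir P1_def pf_def
    by simp
  have JK: "is_joint_kernel C A B {1..Suc k} (face Mf (Suc m)) K \<iota>'"
    unfolding is_joint_kernel_def
  proof (intro conjI ballI impI)
    show "K \<in> Ob C" "\<iota>' \<in> Hm C K A" using oK i'H by auto
  next
    fix i assume i: "i \<in> {1..Suc k}"
    show "cmp C (face Mf (Suc m) i) \<iota>' = zer C K B"
    proof (cases "i = Suc k")
      case True then show ?thesis using di'0 d_def by simp
    next
      case False
      then have "i \<in> {1..k}" using i by auto
      moreover have "face Mf (Suc m) i \<in> Hm C A B" using fH2 A_def B_def by simp
      ultimately show ?thesis using kill1 as2[OF oK oN oA oB kH iH] \<iota>'_def cmp_zer_l[OF P oK oN oB kH] by simp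
    qed
  next
    fix X h assume X: "X \<in> Ob C" and hH: "h \<in> Hm C X A"
      and hk: "\<forall>i\<in>{1..Suc k}. cmp C (face Mf (Suc m) i) h = zer C X B"
    then obtain u where uH: "u \<in> Hm C X N" and iu: "cmp C \<iota> u = h"
      and uu: "\<And>u'. u' \<in> Hm C X N \<Longrightarrow> cmp C \<iota> u' = h \<Longrightarrow> u' = u"
      using U1 by (metis atLeastAtMost_iff le_Suc_eq)
    have dh: "cmp C d h = zer C X B" using hk d_def by auto
    have fu: "cmp C f u = zer C X N2"
      using f_def as2[OF X oN oB oN2 uH diH r2H] as2[OF X oN oA oB uH iH dH] iu dh cmp_zer_r[OF P X oB oN2 r2H]
      by simp
    then obtain v where vH: "v \<in> Hm C X K" and kv: "cmp C \<kappa> v = u"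
      and vv: "\<And>v'. v' \<in> Hm C X K \<Longrightarrow> cmp C \<kappa> v' = u \<Longrightarrow> v' = v"
      using UK X uH by metis
    show "\<exists>!v. v \<in> Hm C X K \<and> cmp C \<iota>' v = h"
    proof (rule ex1I[of _ v])
      show "v \<in> Hm C X K \<and> cmp C \<iota>' v = h" using vH kv iu \<iota>'_def as2[OF X oK oN oA vH kH iH] by simp
    next
      fix v' assume v': "v' \<in> Hm C X K \<and> cmp C \<iota>' v' = h"
      have kv'H: "cmp C \<kappa> v' \<in> Hm C X N" using cH2[OF X oK oN _ kH] v' by blast
      have "cmp C \<iota> (cmp C \<kappa> v') = h" using v' \<iota>'_def as2[OF X oK oN oA _ kH iH] by simp
      then have "cmp C \<kappa> v' = u" using uu kv'H by blast
      then show "v' = v" using vv v' by blast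
    qed
  qed
  have "splitk C Mo Mf (Suc m) (Suc k) K \<iota>' r'"
    unfolding splitk_def using JK r'H r'i' i'r' A_def B_def by simp
  then show ?thesis by blast
qed

end


lemma all_split:
  assumes P: "preadditive C" and SM: "simplicial_module C Mo Mf" and W: "weakly_idempotent_complete C"
  shows "\<forall>k\<le>n. \<exists>N \<iota> r. splitk C Mo Mf n k N \<iota> r"
proof (induction n)
  case 0
  then show ?case using split0[OF P SM W] by blast
next
  case (Suc m)
  show ?case
  proof (intro allI impI)
    fix k assume "k \<le> Suc m"
    then show "\<exists>N \<iota> r. splitk C Mo Mf (Suc m) k N \<iota> r"
    proof (induction k)
      case 0
      then show ?case using split0[OF P SM W] by blast
    next
      case (Suc k)
      then have k: "k \<le> m" by simp
      then obtain N \<iota> r where S1: "splitk C Mo Mf (Suc m) k N \<iota> r" using Suc by auto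
      obtain N2 \<iota>2 r2 where S2: "splitk C Mo Mf m k N2 \<iota>2 r2" using Suc.prems k \<open>\<forall>k\<le>m. _\<close> by blast
      show ?case using step[OF P SM W k S1 S2] .
    qed
  qed
qed

theorem mainTheorem3:
  fixes C :: "('o,'m,'x) preadd_scheme"
    and Mo :: "nat \<Rightarrow> 'o" and Mf :: "nat \<Rightarrow> nat \<Rightarrow> (nat \<Rightarrow> nat) \<Rightarrow> 'm"
    and n :: nat
  assumes "preadditive C"
    and "weakly_idempotent_complete C"
    and "simplicial_module C Mo Mf"
  shows "\<exists>N \<iota> r. is_joint_kernel C (Mo n) (Mo (n - 1)) {1..n} (face Mf n) N \<iota> \<and>
           r \<in> Hm C (Mo n) N \<and> cmp C r \<iota> = ident C N \<and> cmp C \<iota> r = pn C Mo Mf n \<and>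
           (\<exists>D j s. D \<in> Ob C \<and> j \<in> Hm C D (Mo n) \<and> s \<in> Hm C (Mo n) D \<and>
              cmp C s j = ident C D \<and>
              cmp C j s = pls C (ident C (Mo n)) (ngt C (pn C Mo Mf n)) \<and>
              cmp C r j = zer C D N \<and> cmp C s \<iota> = zer C N D \<and>
              pls C (cmp C \<iota> r) (cmp C j s) = ident C (Mo n))"
proof -
  note P = assms(1) and W = assms(2) and SM = assms(3)
  obtain N \<iota> r where S: "splitk C Mo Mf n n N \<iota> r" using all_split[OF P SM W, of n] by blast
  define A where "A = Mo n"
  define p where "p = pn C Mo Mf n"
  have oA: "A \<in> Ob C" using MoOb[OF SM] A_def by simp
  have JK: "is_joint_kernel C (Mo n) (Mo (n - 1)) {1..n} (face Mf n) N \<iota>" and rH: "r \<in> Hm C A N"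
    and ri: "cmp C r \<iota> = ident C N" and ir: "cmp C \<iota> r = p"
    using S unfolding splitk_def A_def p_def pn_def by auto
  have oN: "N \<in> Ob C" and iH: "\<iota> \<in> Hm C N A" using JK unfolding is_joint_kernel_def A_def by auto
  obtain D j where KK: "is_kernel C A N r D j"
    using W oA oN rH iH ri unfolding weakly_idempotent_complete_def by blast
  have oD: "D \<in> Ob C" and jH: "j \<in> Hm C D A" and rj: "cmp C r j = zer C D N"
    and UK: "\<forall>X\<in>Ob C. \<forall>h\<in>Hm C X A. cmp C r h = zer C X N \<longrightarrow> (\<exists>!u. u \<in> Hm C X D \<and> cmp C j u = h)"
    using KK unfolding is_kernel_def by auto
  have pH: "p \<in> Hm C A A" using ir cmpH[OF P oA oN oA rH iH] by simp
  define q where "q = pls C (ident C A) (ngt C p)"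
  have npH: "ngt C p \<in> Hm C A A" using ngtH[OF P oA oA pH] .
  have qH: "q \<in> Hm C A A" using plsH[OF P oA oA idH[OF P oA] npH] q_def by simp
  have rp: "cmp C r p = r"
    using ir assoc[OF P oA oN oA oN rH iH rH] ri idl[OF P oA oN rH] by simp
  have rq: "cmp C r q = zer C A N"
    using q_def distl[OF P oA oA oN idH[OF P oA] npH rH] idr[OF P oA oN rH]
      cmp_ngt_r[OF P oA oA oN pH rH] rp ngt_r[OF P oA oN rH] by simp
  obtain s where sH: "s \<in> Hm C A D" and js: "cmp C j s = q" using UK oA qH rq by blast
  have qj: "cmp C q j = j"
  proof -
    have "cmp C q j = pls C j (ngt C (cmp C p j))"
      using q_def distr[OF P oD oA oA idH[OF P oA] npH jH] idl[OF P oD oA jH] cmp_ngt_l[OF P oD oA oA pH jH]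
      by simp
    also have "cmp C p j = zer C D A"
      using ir assoc[OF P oD oA oN oA jH rH iH] rj cmp_zer_r[OF P oD oN oA iH] by simp
    finally show ?thesis using ngt_zer[OF P oD oA] zer_r[OF P oD oA jH] by simp
  qed
  have sj: "cmp C s j = ident C D"
  proof -
    have a: "cmp C s j \<in> Hm C D D" using cmpH[OF P oD oA oD jH sH] .
    have e1: "cmp C j (cmp C s j) = j" using assoc[OF P oD oA oD oA jH sH jH] js qj by simp
    have e2: "cmp C j (ident C D) = j" using idr[OF P oD oA jH] .
    show ?thesis using UK oD jH rj a idH[OF P oD] e1 e2 by blast
  qed
  have si: "cmp C s \<iota> = zer C N D"
  proof -
    have a: "cmp C s \<iota> \<in> Hm C N D" using cmpH[OF P oN oA oD iH sH] .
    have pi: "cmp C p \<iota> = \<iota>"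
      using ir assoc[OF P oN oA oN oA iH rH iH] ri idr[OF P oN oA iH] by simp
    have e1: "cmp C j (cmp C s \<iota>) = zer C N A"
      using assoc[OF P oN oA oD oA iH sH jH] js q_def distr[OF P oN oA oA idH[OF P oA] npH iH]
        idl[OF P oN oA iH] cmp_ngt_l[OF P oN oA oA pH iH] pi ngt_r[OF P oN oA iH] by simp
    have e2: "cmp C j (zer C N D) = zer C N A" using cmp_zer_r[OF P oN oD oA jH] .
    have z: "cmp C r (zer C N A) = zer C N N" using cmp_zer_r[OF P oN oA oN rH] .
    show ?thesis using UK oN zerH[OF P oN oA] z a zerH[OF P oN oD] e1 e2 by metis
  qed
  have sum: "pls C (cmp C \<iota> r) (cmp C j s) = ident C A"
  proof -
    have "pls C p (pls C (ident C A) (ngt C p)) = pls C p (pls C (ngt C p) (ident C A))"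
      using pls_comm[OF P oA oA idH[OF P oA] npH] by simp
    also have "\<dots> = pls C (pls C p (ngt C p)) (ident C A)"
      using pls_assoc[OF P oA oA pH npH idH[OF P oA]] by simp
    also have "\<dots> = ident C A" using ngt_r[OF P oA oA pH] zer_l[OF P oA oA idH[OF P oA]] by simp
    finally show ?thesis using ir js q_def by simp
  qed
  show ?thesis
    using JK rH ri ir oD jH sH sj js rj si sum q_def unfolding A_def p_def by blast
qed

end
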